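(* Let $\Omega$ be a non-empty bounded open subset of $\mathbf{R}^2$, let $h:\Omega\to\mathbf{R}$ be continuous, and let $\alpha,\beta:\Omega\to\mathbf{R}$ be $C^1$ functions such that $|\alpha_x\beta_y-\alpha_y\beta_x|+|h|>0$ and $(\alpha_x\beta_y-\alpha_y\beta_x)h\ge0$ in $\Omega$. Then any $C^1$ solution $(u,v):\Omega\to\mathbf{R}^2$ in $\Omega$ of the system $$u_xv_y-u_yv_x=h,\qquad \beta_yu_x-\beta_xu_y-\alpha_yv_x+\alpha_xv_y=0$$ satisfies the convex hull-like property in $\Omega$.
   Context: A function $\psi:\mathbf{R}^2\to\mathbf{R}$ is quasi-convex if for each $r\in\mathbf{R}$ the set $\psi^{-1}(]-\infty,r])$ is convex. A continuous function $f:\Omega\to\mathbf{R}^2$ satisfies the convex hull-like property in $\Omega$ if for every continuous quasi-convex $\psi:\mathbf{R}^2\to\mathbf{R}$ there exists $x^*\in\partial\Omega$ such that $\limsup_{x\to x^*,\,x\in\Omega}\psi(f(x))=\sup_{x\in\Omega}\psi(f(x))$. *)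

theory Defs
  imports "HOL-Analysis.Analysis" "HOL-Library.Extended_Real" "HOL-Library.Liminf_Limsup"
begin

definition C1_with_partials ::
  "(real \<times> real) set \<Rightarrow> (real \<times> real \<Rightarrow> real) \<Rightarrow> (real \<times> real \<Rightarrow> real) \<Rightarrow> (real \<times> real \<Rightarrow> real) \<Rightarrow> bool"
where
  "C1_with_partials S f fx fy \<longleftrightarrow>
     (\<forall>p\<in>S. (f has_derivative (\<lambda>(dx, dy). fx p * dx + fy p * dy)) (at p)) \<and>
     continuous_on S fx \<and> continuous_on S fy"

definition quasi_convex :: "(real \<times> real \<Rightarrow> real) \<Rightarrow> bool" where
  "quasi_convex \<psi> \<longleftrightarrow> (\<forall>r. convex {z. \<psi> z \<le> r})"

definition convex_hull_like ::
  "(real \<times> real) set \<Rightarrow> (real \<times> real \<Rightarrow> real \<times> real) \<Rightarrow> bool" where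
  "convex_hull_like \<Omega> f \<longleftrightarrow>
     (\<forall>\<psi>. continuous_on UNIV \<psi> \<and> quasi_convex \<psi> \<longrightarrow>
        (\<exists>xs\<in>frontier \<Omega>.
           Limsup (at xs within \<Omega>) (\<lambda>x. ereal (\<psi> (f x))) = (SUP x\<in>\<Omega>. ereal (\<psi> (f x)))))"

end

theory Submission
  imports Defs
begin

lemma C1_cont:
  assumes "C1_with_partials S f fx fy"
  shows "continuous_on S f"
proof -
  have "\<forall>p\<in>S. isCont f p"
    using assms unfolding C1_with_partials_def using has_derivative_continuous by blast
  then show ?thesis using continuous_at_imp_continuous_on by blast
qed

lemma openmap:
  fixes \<Omega> :: "(real \<times> real) set"
    and h \<alpha> \<alpha>x \<alpha>y \<beta> \<beta>x \<beta>y u ux uy v vx vy :: "real \<times> real \<Rightarrow> real"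
  assumes "open \<Omega>"
    and "C1_with_partials \<Omega> \<alpha> \<alpha>x \<alpha>y"
    and "C1_with_partials \<Omega> \<beta> \<beta>x \<beta>y"
    and "\<forall>p\<in>\<Omega>. \<bar>\<alpha>x p * \<beta>y p - \<alpha>y p * \<beta>x p\<bar> + \<bar>h p\<bar> > 0"
    and "\<forall>p\<in>\<Omega>. (\<alpha>x p * \<beta>y p - \<alpha>y p * \<beta>x p) * h p \<ge> 0"
    and "C1_with_partials \<Omega> u ux uy"
    and "C1_with_partials \<Omega> v vx vy"
    and "\<forall>p\<in>\<Omega>. ux p * vy p - uy p * vx p = h p"
    and "\<forall>p\<in>\<Omega>. \<beta>y p * ux p - \<beta>x p * uy p - \<alpha>y p * vx p + \<alpha>x p * vy p = 0"
    and t: "t \<noteq> 0" and T: "T \<subseteq> \<Omega>" and y: "y \<in> interior T"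
  shows "(\<lambda>p. (u p + t * \<alpha> p, v p + t * \<beta> p)) y \<in> interior ((\<lambda>p. (u p + t * \<alpha> p, v p + t * \<beta> p)) ` T)"
proof -
  have yO: "y \<in> \<Omega>" using y T interior_subset by blast
  have cont: "continuous_on \<Omega> (\<lambda>p. (u p + t * \<alpha> p, v p + t * \<beta> p))"
    using C1_cont[OF assms(2)] C1_cont[OF assms(3)] C1_cont[OF assms(6)] C1_cont[OF assms(7)]
    by (intro continuous_intros) auto
  have du: "(u has_derivative (\<lambda>(dx, dy). ux y * dx + uy y * dy)) (at y)"
    using assms(6) yO unfolding C1_with_partials_def by blast
  have dv: "(v has_derivative (\<lambda>(dx, dy). vx y * dx + vy y * dy)) (at y)"
    using assms(7) yO unfolding C1_with_partials_def by blast
  have da: "(\<alpha> has_derivative (\<lambda>(dx, dy). \<alpha>x y * dx + \<alpha>y y * dy)) (at y)"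
    using assms(2) yO unfolding C1_with_partials_def by blast
  have db: "(\<beta> has_derivative (\<lambda>(dx, dy). \<beta>x y * dx + \<beta>y y * dy)) (at y)"
    using assms(3) yO unfolding C1_with_partials_def by blast
  define a where "a = ux y + t * \<alpha>x y"
  define b where "b = uy y + t * \<alpha>y y"
  define c where "c = vx y + t * \<beta>x y"
  define d where "d = vy y + t * \<beta>y y"
  define J where "J = \<alpha>x y * \<beta>y y - \<alpha>y y * \<beta>x y"
  define D where "D = a * d - b * c"
  have "D = (ux y * vy y - uy y * vx y) + t * (\<beta>y y * ux y - \<beta>x y * uy y - \<alpha>y y * vx y + \<alpha>x y * vy y) + t^2 * J"
    unfolding D_def a_def b_def c_def d_def J_def by (simp add: algebra_simps power2_eq_square)
  then have Dh: "D = h y + t^2 * J" using assms(8,9) yO by simp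
  have J1: "\<bar>J\<bar> + \<bar>h y\<bar> > 0" and J2: "J * h y \<ge> 0" using assms(4,5) yO J_def by auto
  have D0: "D \<noteq> 0"
  proof (cases "J = 0")
    case True
    then show ?thesis using Dh J1 by simp
  next
    case False
    have "t^2 * J * J = (t * J)^2" by (simp add: power2_eq_square)
    moreover have "(t * J)^2 > 0" using False t by simp
    ultimately have "t^2 * J * J > 0" by simp
    then have "J * D > 0" using Dh J2 by (simp add: algebra_simps power2_eq_square)
    then show ?thesis by auto
  qed
  have dF: "((\<lambda>p. (u p + t * \<alpha> p, v p + t * \<beta> p)) has_derivative
      (\<lambda>z. ((\<lambda>(dx, dy). ux y * dx + uy y * dy) z + t * (\<lambda>(dx, dy). \<alpha>x y * dx + \<alpha>y y * dy) z,
            (\<lambda>(dx, dy). vx y * dx + vy y * dy) z + t * (\<lambda>(dx, dy). \<beta>x y * dx + \<beta>y y * dy) z))) (at y)"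
    by (intro has_derivative_Pair has_derivative_add has_derivative_mult_right du dv da db)
  have feq: "(\<lambda>z. ((\<lambda>(dx, dy). ux y * dx + uy y * dy) z + t * (\<lambda>(dx, dy). \<alpha>x y * dx + \<alpha>y y * dy) z,
            (\<lambda>(dx, dy). vx y * dx + vy y * dy) z + t * (\<lambda>(dx, dy). \<beta>x y * dx + \<beta>y y * dy) z))
      = (\<lambda>z. (a * fst z + b * snd z, c * fst z + d * snd z))"
    by (auto simp: a_def b_def c_def d_def case_prod_beta algebra_simps)
  define g' where "g' = (\<lambda>z::real\<times>real. ((d * fst z - b * snd z) / D, (a * snd z - c * fst z) / D))"
  have "linear g'"
    by (rule linearI) (auto simp: g'_def algebra_simps add_divide_distrib diff_divide_distrib)
  then have blg: "bounded_linear g'" using linear_conv_bounded_linear by blast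
  have comp: "(\<lambda>z. (a * fst z + b * snd z, c * fst z + d * snd z)) \<circ> g' = id"
  proof
    fix z :: "real \<times> real"
    show "((\<lambda>z. (a * fst z + b * snd z, c * fst z + d * snd z)) \<circ> g') z = id z"
    proof (cases z)
      case (Pair p1 p2)
      have gen: "x * (X / D) + w * (Y / D) = (x * X + w * Y) / D" for x w X Y
        by (simp add: add_divide_distrib)
      have n1: "a * (d * p1 - b * p2) + b * (a * p2 - c * p1) = D * p1"
        unfolding D_def by (simp add: algebra_simps)
      have n2: "c * (d * p1 - b * p2) + d * (a * p2 - c * p1) = D * p2"
        unfolding D_def by (simp add: algebra_simps)
      have e1: "a * ((d * p1 - b * p2) / D) + b * ((a * p2 - c * p1) / D) = p1"
        unfolding gen n1 using D0 by simp
      have e2: "c * ((d * p1 - b * p2) / D) + d * ((a * p2 - c * p1) / D) = p2"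
        unfolding gen n2 using D0 by simp
      show ?thesis using e1 e2 Pair by (simp add: g'_def)
    qed
  qed
  show ?thesis
    by (rule sussmann_open_mapping[OF assms(1) cont yO dF[unfolded feq] blg comp T y])
qed


lemma core:
  fixes F :: "real \<times> real \<Rightarrow> real \<times> real" and \<psi> :: "real \<times> real \<Rightarrow> real"
  assumes C: "compact C" and Fc: "continuous_on C F"
    and op: "\<forall>y\<in>interior C. F y \<in> interior (F ` interior C)"
    and qc: "quasi_convex \<psi>" and pc: "continuous_on UNIV \<psi>"
    and x1: "x1 \<in> C" and bd: "\<forall>x\<in>C - interior C. \<psi> (F x) < \<psi> (F x1)"
  shows False
proof -
  define T where "T = F ` C"
  have cT: "compact T" unfolding T_def using C Fc compact_continuous_image by blast
  have pcT: "continuous_on T \<psi>" using pc continuous_on_subset by blast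
  obtain zm where zm: "zm \<in> T" "\<forall>z\<in>T. \<psi> z \<le> \<psi> zm"
    using continuous_attains_sup[OF cT _ pcT] x1 T_def by blast
  define L where "L = \<psi> zm"
  have x1L: "\<psi> (F x1) \<le> L" using zm x1 T_def L_def by auto
  have "C \<noteq> UNIV" using compact_imp_bounded[OF C] not_bounded_UNIV by auto
  then have "frontier C \<noteq> {}" using frontier_not_empty x1 by blast
  then obtain xq where xq: "xq \<in> C" "xq \<notin> interior C"
    using C compact_imp_closed frontier_def closure_closed by (metis DiffE ex_in_conv)
  define q where "q = F xq"
  have qL: "\<psi> q < L"
  proof -
    have "\<psi> (F xq) < \<psi> (F x1)" using bd xq by blast
    then show ?thesis unfolding q_def using x1L by linarith
  qed
  define E where "E = T \<inter> \<psi> -` {L}"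
  have "closed (\<psi> -` {L})"
    by (rule continuous_closed_vimage[OF closed_singleton]) (use pc continuous_on_eq_continuous_at in auto)
  then have cE: "compact E" unfolding E_def using cT compact_Int_closed by blast
  have "zm \<in> E" using zm E_def L_def by auto
  have dc: "continuous_on E (\<lambda>z. dist q z)" by (intro continuous_intros)
  obtain zs where zs: "zs \<in> E" "\<forall>z\<in>E. dist q z \<le> dist q zs"
    using continuous_attains_sup[OF cE _ dc] \<open>zm \<in> E\<close> by blast
  obtain ys where ys: "ys \<in> C" "F ys = zs" "\<psi> zs = L" using zs(1) E_def T_def by auto
  have "ys \<in> interior C"
  proof (rule ccontr)
    assume "ys \<notin> interior C"
    then have "\<psi> (F ys) < \<psi> (F x1)" using bd ys(1) by blast
    then show False using ys(2,3) x1L by simp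
  qed
  then have "zs \<in> interior (F ` interior C)" using op ys by auto
  then obtain r where r: "r > 0" "ball zs r \<subseteq> interior (F ` interior C)"
    using open_contains_ball[of "interior (F ` interior C)"] open_interior by blast
  then have r: "r > 0" "ball zs r \<subseteq> F ` interior C" using interior_subset by blast+
  define d where "d = dist q zs"
  have "q \<noteq> zs" using qL ys by auto
  then have d0: "d > 0" using d_def by auto
  define z' where "z' = zs + (r / 2 / d) *\<^sub>R (zs - q)"
  have nz: "norm (zs - q) = d" unfolding d_def by (simp add: dist_norm norm_minus_commute)
  have "dist zs z' = norm ((r / 2 / d) *\<^sub>R (zs - q))" unfolding z'_def dist_norm by (simp add: norm_minus_commute)
  also have "\<dots> = r / 2" using nz d0 r by simp
  finally have "dist zs z' = r / 2" .
  then have "z' \<in> ball zs r" using r by auto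
  then obtain y' where y': "y' \<in> interior C" "F y' = z'" using r by auto
  then have z'T: "z' \<in> T" using T_def interior_subset by blast
  have e1: "z' - q = (1 + r / 2 / d) *\<^sub>R (zs - q)" unfolding z'_def by (simp add: algebra_simps)
  have "dist q z' = norm (z' - q)" by (simp add: dist_norm norm_minus_commute)
  also have "\<dots> = (1 + r / 2 / d) * d" unfolding e1 using nz d0 r by simp
  also have "\<dots> = d + r / 2" using d0 by (simp add: field_simps)
  finally have dz': "dist q z' = d + r / 2" .
  have z'L: "\<psi> z' < L"
  proof (rule ccontr)
    assume "\<not> \<psi> z' < L"
    moreover have "\<psi> z' \<le> L" using zm(2) z'T unfolding L_def by blast
    ultimately have "\<psi> z' = L" by linarith
    then have "z' \<in> E" using E_def z'T by auto
    then have "dist q z' \<le> dist q zs" using zs(2) by blast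
    then show False using dz' d_def r by linarith
  qed
  define M where "M = max (\<psi> q) (\<psi> z')"
  have cv: "convex {z. \<psi> z \<le> M}" using qc quasi_convex_def by blast
  define lam where "lam = d / (d + r / 2)"
  have l0: "0 \<le> lam" "lam \<le> 1" using d0 r lam_def by auto
  have "(1 - lam) *\<^sub>R q + lam *\<^sub>R z' \<in> {z. \<psi> z \<le> M}"
    by (rule convexD[OF cv]) (use l0 M_def in auto)
  moreover have "(1 - lam) *\<^sub>R q + lam *\<^sub>R z' = zs"
  proof -
    have "(1 - lam) *\<^sub>R q + lam *\<^sub>R z' = q + lam *\<^sub>R (z' - q)" by (simp add: algebra_simps)
    also have "\<dots> = q + (lam * (1 + r / 2 / d)) *\<^sub>R (zs - q)" using e1 by simp
    also have "lam * (1 + r / 2 / d) = 1" using d0 r lam_def by (simp add: field_simps)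
    finally show ?thesis by simp
  qed
  ultimately have "\<psi> zs \<le> M" by auto
  then show False using ys qL z'L M_def by auto
qed


theorem theorem4:
  fixes \<Omega> :: "(real \<times> real) set"
    and h \<alpha> \<alpha>x \<alpha>y \<beta> \<beta>x \<beta>y u ux uy v vx vy :: "real \<times> real \<Rightarrow> real"
  assumes "open \<Omega>" and "bounded \<Omega>" and "\<Omega> \<noteq> {}"
    and "continuous_on \<Omega> h"
    and "C1_with_partials \<Omega> \<alpha> \<alpha>x \<alpha>y"
    and "C1_with_partials \<Omega> \<beta> \<beta>x \<beta>y"
    and "\<forall>p\<in>\<Omega>. \<bar>\<alpha>x p * \<beta>y p - \<alpha>y p * \<beta>x p\<bar> + \<bar>h p\<bar> > 0"
    and "\<forall>p\<in>\<Omega>. (\<alpha>x p * \<beta>y p - \<alpha>y p * \<beta>x p) * h p \<ge> 0"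
    and "C1_with_partials \<Omega> u ux uy"
    and "C1_with_partials \<Omega> v vx vy"
    and "\<forall>p\<in>\<Omega>. ux p * vy p - uy p * vx p = h p"
    and "\<forall>p\<in>\<Omega>. \<beta>y p * ux p - \<beta>x p * uy p - \<alpha>y p * vx p + \<alpha>x p * vy p = 0"
  shows "convex_hull_like \<Omega> (\<lambda>p. (u p, v p))"
  unfolding convex_hull_like_def
proof (intro allI impI)
  note A = assms
  fix \<psi> :: "real \<times> real \<Rightarrow> real"
  assume "continuous_on UNIV \<psi> \<and> quasi_convex \<psi>"
  then have pc: "continuous_on UNIV \<psi>" and qc: "quasi_convex \<psi>" by auto
  define g where "g = (\<lambda>x. \<psi> (u x, v x))"
  define S where "S = (SUP x\<in>\<Omega>. ereal (g x))"
  have uvc: "continuous_on \<Omega> (\<lambda>x. (u x, v x))"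
    using C1_cont[OF A(9)] C1_cont[OF A(10)] by (intro continuous_intros)
  have abc: "continuous_on \<Omega> (\<lambda>x. (\<alpha> x, \<beta> x))"
    using C1_cont[OF A(5)] C1_cont[OF A(6)] by (intro continuous_intros)
  have gc: "continuous_on \<Omega> g"
    unfolding g_def by (rule continuous_on_compose2[OF pc uvc subset_UNIV])
  show "\<exists>xs\<in>frontier \<Omega>. Limsup (at xs within \<Omega>) (\<lambda>x. ereal (\<psi> (u x, v x))) = (SUP x\<in>\<Omega>. ereal (\<psi> (u x, v x)))"
  proof (rule ccontr)
    assume nc: "\<not> (\<exists>xs\<in>frontier \<Omega>. Limsup (at xs within \<Omega>) (\<lambda>x. ereal (\<psi> (u x, v x))) = (SUP x\<in>\<Omega>. ereal (\<psi> (u x, v x))))"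
    have lt: "\<forall>xs\<in>frontier \<Omega>. Limsup (at xs within \<Omega>) (\<lambda>x. ereal (g x)) < S"
    proof
      fix xs assume xsf: "xs \<in> frontier \<Omega>"
      have "eventually (\<lambda>x. ereal (g x) \<le> S) (at xs within \<Omega>)"
        unfolding eventually_at_filter S_def by (auto intro!: always_eventually SUP_upper)
      then have "Limsup (at xs within \<Omega>) (\<lambda>x. ereal (g x)) \<le> S" by (rule Limsup_bounded)
      moreover have "Limsup (at xs within \<Omega>) (\<lambda>x. ereal (g x)) \<noteq> S" using nc xsf unfolding g_def S_def by auto
      ultimately show "Limsup (at xs within \<Omega>) (\<lambda>x. ereal (g x)) < S" by simp
    qed
    have loc: "\<forall>xs\<in>frontier \<Omega>. \<exists>m. ereal m < S \<and> (\<exists>d>0. \<forall>x\<in>\<Omega>. dist x xs < d \<longrightarrow> g x < m)"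
    proof
      fix xs assume xsf: "xs \<in> frontier \<Omega>"
      obtain m where m: "Limsup (at xs within \<Omega>) (\<lambda>x. ereal (g x)) < ereal m" "ereal m < S"
        using ereal_dense2 lt xsf by blast
      have "eventually (\<lambda>x. ereal (g x) < ereal m) (at xs within \<Omega>)" using Limsup_lessD[OF m(1)] .
      then obtain d where d: "d > 0" "\<forall>x\<in>\<Omega>. x \<noteq> xs \<and> dist x xs < d \<longrightarrow> ereal (g x) < ereal m"
        unfolding eventually_at by blast
      have "xs \<notin> \<Omega>" using xsf A(1) unfolding frontier_def by (simp add: interior_open)
      then have "\<forall>x\<in>\<Omega>. dist x xs < d \<longrightarrow> g x < m" using d(2) by fastforce
      then show "\<exists>m. ereal m < S \<and> (\<exists>d>0. \<forall>x\<in>\<Omega>. dist x xs < d \<longrightarrow> g x < m)" using m(2) d(1) by blast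
    qed
    define Gm where "Gm = (\<lambda>m::real. \<Union>{ball xs d | xs d. 0 < d \<and> (\<forall>x\<in>\<Omega>. dist x xs < d \<longrightarrow> g x < m)})"
    have Gopen: "open (Gm m)" for m unfolding Gm_def by (rule open_Union) auto
    have Gmono: "Gm m \<subseteq> Gm m'" if "m \<le> m'" for m m'
    proof
      fix z assume "z \<in> Gm m"
      then obtain xs d where "z \<in> ball xs d" "0 < d" "\<forall>x\<in>\<Omega>. dist x xs < d \<longrightarrow> g x < m"
        unfolding Gm_def by blast
      then have "\<forall>x\<in>\<Omega>. dist x xs < d \<longrightarrow> g x < m'" using that by fastforce
      then show "z \<in> Gm m'" unfolding Gm_def using \<open>z \<in> ball xs d\<close> \<open>0 < d\<close> by blast
    qed
    have Gval: "g x < m" if "x \<in> \<Omega>" "x \<in> Gm m" for x m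
      using that unfolding Gm_def by (auto simp: dist_commute)
    have cover: "frontier \<Omega> \<subseteq> (\<Union>m\<in>{m. ereal m < S}. Gm m)"
    proof
      fix xs assume "xs \<in> frontier \<Omega>"
      then obtain m d where "ereal m < S" "d > 0" "\<forall>x\<in>\<Omega>. dist x xs < d \<longrightarrow> g x < m"
        using loc by blast
      then have "ball xs d \<in> {ball xs d | xs d. 0 < d \<and> (\<forall>x\<in>\<Omega>. dist x xs < d \<longrightarrow> g x < m)}" by blast
      moreover have "xs \<in> ball xs d" using \<open>d > 0\<close> by simp
      ultimately have "xs \<in> Gm m" unfolding Gm_def by (rule UnionI)
      then show "xs \<in> (\<Union>m\<in>{m. ereal m < S}. Gm m)" using \<open>ereal m < S\<close> by blast
    qed
    have cF: "compact (frontier \<Omega>)" using compact_frontier_bounded A(2) by blast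
    obtain C' where C': "C' \<subseteq> {m. ereal m < S}" "finite C'" "frontier \<Omega> \<subseteq> (\<Union>c\<in>C'. Gm c)"
      using compactE_image[OF cF Gopen cover] by blast
    obtain x00 where x00: "x00 \<in> \<Omega>" using A(3) by blast
    define m0 where "m0 = g x00 - 1"
    have "ereal m0 < ereal (g x00)" unfolding m0_def by simp
    also have "\<dots> \<le> S" unfolding S_def using x00 by (rule SUP_upper)
    finally have m0S: "ereal m0 < S" .
    define m where "m = Max (insert m0 C')"
    have "m \<in> insert m0 C'" unfolding m_def using C'(2) by (intro Max_in) auto
    then have mS: "ereal m < S" using m0S C'(1) by auto
    have fG: "frontier \<Omega> \<subseteq> Gm m"
    proof
      fix z assume "z \<in> frontier \<Omega>"
      then obtain c where "c \<in> C'" "z \<in> Gm c" using C'(3) by blast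
      moreover have "c \<le> m" unfolding m_def using C'(2) \<open>c \<in> C'\<close> by (intro Max_ge) auto
      ultimately show "z \<in> Gm m" using Gmono by blast
    qed
    obtain x0 where x0: "x0 \<in> \<Omega>" "ereal m < ereal (g x0)" using mS unfolding S_def less_SUP_iff by blast
    then have gx0: "m < g x0" by simp
    define G where "G = Gm m"
    define K where "K = closure \<Omega> - G"
    have cK: "compact K" unfolding K_def G_def
      using closed_Diff[OF closed_closure Gopen] bounded_subset[OF bounded_closure[OF A(2)]]
      by (meson Diff_subset compact_eq_bounded_closed)
    have KO: "K \<subseteq> \<Omega>" using closure_Un_frontier[of \<Omega>] fG unfolding K_def G_def by auto
    have "x0 \<notin> Gm m" using Gval[OF x0(1)] gx0 by force
    moreover have "x0 \<in> closure \<Omega>" using x0(1) closure_subset by blast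
    ultimately have x0K: "x0 \<in> K" unfolding K_def G_def by blast
    obtain \<epsilon> where eps: "\<epsilon> > 0" "(\<Union>x\<in>K. cball x \<epsilon>) \<subseteq> \<Omega>"
      using compact_subset_open_imp_cball_epsilon_subset[OF cK A(1) KO] by blast
    define C where "C = {x + y | x y. x \<in> K \<and> y \<in> cball 0 \<epsilon>}"
    have cC: "compact C" unfolding C_def by (rule compact_sums[OF cK compact_cball])
    have CO: "C \<subseteq> \<Omega>"
    proof
      fix z assume "z \<in> C"
      then obtain x y where xy: "z = x + y" "x \<in> K" "y \<in> cball 0 \<epsilon>" unfolding C_def by blast
      then have "z \<in> cball x \<epsilon>" by (simp add: dist_norm)
      then show "z \<in> \<Omega>" using eps(2) xy(2) by blast
    qed
    have KiC: "K \<subseteq> interior C"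
    proof
      fix k assume k: "k \<in> K"
      have "ball k \<epsilon> \<subseteq> C"
      proof
        fix z assume "z \<in> ball k \<epsilon>"
        then have "z - k \<in> cball 0 \<epsilon>" by (simp add: dist_norm norm_minus_commute)
        moreover have "z = k + (z - k)" by simp
        ultimately show "z \<in> C" unfolding C_def using k by blast
      qed
      then have "ball k \<epsilon> \<subseteq> interior C" by (rule interior_maximal) simp
      then show "k \<in> interior C" using eps(1) by auto
    qed
    have bdC: "\<forall>x\<in>C - interior C. g x < m"
    proof
      fix x assume x: "x \<in> C - interior C"
      then have "x \<in> \<Omega>" "x \<notin> K" using CO KiC by auto
      then have "x \<in> G" unfolding K_def using closure_subset by blast
      then show "g x < m" using Gval \<open>x \<in> \<Omega>\<close> G_def by blast
    qed
    have x0C: "x0 \<in> C" using x0K KiC interior_subset by blast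
    obtain m1 where m1: "m1 < m" "\<forall>x\<in>C - interior C. g x \<le> m1"
    proof (cases "C - interior C = {}")
      case True
      then show ?thesis using that[of "m - 1"] by auto
    next
      case False
      have "compact (C - interior C)" using compact_diff[OF cC open_interior] .
      moreover have "continuous_on (C - interior C) g" using continuous_on_subset[OF gc] CO by blast
      ultimately obtain xm where "xm \<in> C - interior C" "\<forall>y\<in>C - interior C. g y \<le> g xm"
        using continuous_attains_sup[OF _ False] by blast
      then show ?thesis using that[of "g xm"] bdC by blast
    qed
    define e where "e = (g x0 - m1) / 2"
    have e0: "e > 0" using gx0 m1(1) e_def by simp
    have "compact ((\<lambda>x. (\<alpha> x, \<beta> x)) ` C)"
      using compact_continuous_image[OF continuous_on_subset[OF abc CO] cC] .
    then have "bounded ((\<lambda>x. (\<alpha> x, \<beta> x)) ` C)" by (rule compact_imp_bounded)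
    then obtain B where B: "B > 0" "\<forall>z\<in>(\<lambda>x. (\<alpha> x, \<beta> x)) ` C. norm z \<le> B"
      unfolding bounded_pos by blast
    then have B: "B > 0" "\<forall>x\<in>C. norm (\<alpha> x, \<beta> x) \<le> B" by auto
    define N where "N = {x + y | x y. x \<in> (\<lambda>x. (u x, v x)) ` C \<and> y \<in> cball 0 1}"
    have cN: "compact N" unfolding N_def
      by (rule compact_sums[OF compact_continuous_image[OF continuous_on_subset[OF uvc CO] cC] compact_cball])
    have "uniformly_continuous_on N \<psi>"
      by (rule compact_uniformly_continuous[OF continuous_on_subset[OF pc subset_UNIV] cN])
    then obtain \<rho> where rho: "\<rho> > 0" "\<forall>x\<in>N. \<forall>x'\<in>N. dist x' x < \<rho> \<longrightarrow> dist (\<psi> x') (\<psi> x) < e"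
      unfolding uniformly_continuous_on_def using e0 by blast
    define t where "t = min 1 \<rho> / (2 * B)"
    have t0: "t > 0" using rho(1) B(1) t_def by simp
    define F where "F = (\<lambda>p. (u p + t * \<alpha> p, v p + t * \<beta> p))"
    have close: "\<bar>\<psi> (F x) - g x\<bar> < e" if x: "x \<in> C" for x
    proof -
      have Fx: "F x = (u x, v x) + t *\<^sub>R (\<alpha> x, \<beta> x)" by (simp add: F_def)
      have "norm (t *\<^sub>R (\<alpha> x, \<beta> x)) = t * norm (\<alpha> x, \<beta> x)" unfolding norm_scaleR using t0 by simp
      also have "\<dots> \<le> t * B" using B(2) x t0 by (simp add: mult_left_mono)
      also have "\<dots> = min 1 \<rho> / 2" using B(1) t_def by simp
      finally have nb: "norm (t *\<^sub>R (\<alpha> x, \<beta> x)) \<le> min 1 \<rho> / 2" .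
      then have "t *\<^sub>R (\<alpha> x, \<beta> x) \<in> cball 0 1" by simp
      then have FN: "F x \<in> N" unfolding N_def Fx using x by blast
      have imgx: "(u x, v x) \<in> (\<lambda>x. (u x, v x)) ` C" using x by blast
      have uN: "(u x, v x) \<in> N" unfolding N_def
        by (rule CollectI, rule exI[of _ "(u x, v x)"], rule exI[of _ 0]) (use imgx in simp)
      have "dist (F x) (u x, v x) = norm (t *\<^sub>R (\<alpha> x, \<beta> x))" unfolding Fx by (simp add: dist_norm)
      then have "dist (F x) (u x, v x) < \<rho>" using nb rho(1) by linarith
      then have "dist (\<psi> (F x)) (\<psi> (u x, v x)) < e" using rho(2) FN uN by blast
      then show ?thesis by (simp add: g_def dist_real_def)
    qed
    have Fc: "continuous_on C F" unfolding F_def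
      using C1_cont[OF A(5)] C1_cont[OF A(6)] C1_cont[OF A(9)] C1_cont[OF A(10)] CO
      by (intro continuous_intros) (auto intro: continuous_on_subset)
    have op: "\<forall>y\<in>interior C. F y \<in> interior (F ` interior C)"
    proof
      fix y assume "y \<in> interior C"
      then have y: "y \<in> interior (interior C)" by simp
      have T: "interior C \<subseteq> \<Omega>" using CO interior_subset by blast
      show "F y \<in> interior (F ` interior C)" unfolding F_def
        using openmap[OF A(1) A(5) A(6) A(7) A(8) A(9) A(10) A(11) A(12) _ T y] t0 by simp
    qed
    have bd: "\<forall>x\<in>C - interior C. \<psi> (F x) < \<psi> (F x0)"
    proof
      fix x assume x: "x \<in> C - interior C"
      have "\<psi> (F x) < g x + e" using close[of x] x by auto
      moreover have "g x \<le> m1" using m1(2) x by blast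
      moreover have "g x0 - e < \<psi> (F x0)" using close[OF x0C] by auto
      moreover have "g x0 = m1 + 2 * e" unfolding e_def by (simp add: field_simps)
      ultimately show "\<psi> (F x) < \<psi> (F x0)" by linarith
    qed
    show False by (rule core[OF cC Fc op qc pc x0C bd])
  qed
qed

end
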